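(* Let $G=(V,E)$ be a graph with maximum degree $\Delta$ and let $h\le\log\Delta$ be a nonnegative integer. Assuming the base case of Procedure Edge-Coloring produces a proper $(\Delta'+1)$-edge-coloring of its input (of maximum degree $\Delta'$), Procedure Edge-Coloring$(G,h)$ computes a proper $(\Delta+3\cdot 2^h)$-edge-coloring of $G$.
   Context: Logarithms are base 2. A proper $k$-edge-coloring of $G$ is a map $\varphi:E\to\{1,\dots,k\}$ with $\varphi(e)\ne\varphi(e')$ for distinct edges sharing an endpoint. A degree-splitting of $H$ with discrepancy $\kappa$ is a partition $(E_1,E_2)$ of $E(H)$ with $|\deg_{E_1}(v)-\deg_{E_2}(v)|\le\kappa$ for every vertex $v$. Procedure Edge-Coloring$(H,h)$: if $h=0$, return a proper $(\Delta(H)+1)$-edge-coloring of $H$ with palette $\{1,\dots,\Delta(H)+1\}$ computed by a base-case subroutine. Otherwise compute a degree-splitting $(E_1,E_2)$ of $H$ with discrepancy at most 2 and $\{|E_1|,|E_2|\}=\{\lfloor |E(H)|/2\rfloor,\lceil |E(H)|/2\rceil\}$; let $H_1=(V(H),E_1)$, $H_2=(V(H),E_2)$ (isolated vertices discarded); compute $\varphi_1=$ Edge-Coloring$(H_1,h-1)$, $\varphi_2=$ Edge-Coloring$(H_2,h-1)$; return $\varphi(e)=\varphi_1(e)$ for $e\in E_1$ and $\varphi(e)=p_1+\varphi_2(e)$ for $e\in E_2$, where $p_1$ is the palette size of $\varphi_1$ (the palette of $\varphi$ has size $p_1+p_2$). *)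

theory Defs
  imports Complex_Main
begin

text \<open>A (simple, finite) graph is given by its edge set; every edge is a 2-element
  set of vertices. Isolated vertices play no role, so the vertex set is left implicit.\<close>

definition graph :: "'a set set \<Rightarrow> bool" where
  "graph E \<longleftrightarrow> finite E \<and> (\<forall>e\<in>E. card e = 2)"

definition deg :: "'a set set \<Rightarrow> 'a \<Rightarrow> nat" where
  "deg E v = card {e\<in>E. v \<in> e}"

definition maxdeg :: "'a set set \<Rightarrow> nat" where
  "maxdeg E = Max ({deg E v | v. v \<in> \<Union>E} \<union> {0})"

definition proper_edge_coloring :: "'a set set \<Rightarrow> nat \<Rightarrow> ('a set \<Rightarrow> nat) \<Rightarrow> bool" where
  "proper_edge_coloring E k \<phi> \<longleftrightarrow>
     (\<forall>e\<in>E. \<phi> e \<in> {1..k}) \<and>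
     (\<forall>e\<in>E. \<forall>e'\<in>E. e \<noteq> e' \<and> e \<inter> e' \<noteq> {} \<longrightarrow> \<phi> e \<noteq> \<phi> e')"

definition degree_splitting :: "'a set set \<Rightarrow> 'a set set \<Rightarrow> 'a set set \<Rightarrow> nat \<Rightarrow> bool" where
  "degree_splitting E E1 E2 \<kappa> \<longleftrightarrow>
     E1 \<union> E2 = E \<and> E1 \<inter> E2 = {} \<and>
     (\<forall>v. \<bar>int (deg E1 v) - int (deg E2 v)\<bar> \<le> int \<kappa>)"

text \<open>edge_coloring_run H h phi p: some execution of Procedure Edge-Coloring(H,h)
  (with any admissible choice of degree splittings, and a base-case subroutine that
  returns a proper (Delta(H)+1)-edge-coloring) returns the coloring \<phi> with palette size p.\<close>
inductive edge_coloring_run :: "'a set set \<Rightarrow> nat \<Rightarrow> ('a set \<Rightarrow> nat) \<Rightarrow> nat \<Rightarrow> bool" where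
  base: "proper_edge_coloring H (maxdeg H + 1) \<phi> \<Longrightarrow>
         edge_coloring_run H 0 \<phi> (maxdeg H + 1)"
| step: "\<lbrakk> degree_splitting H E1 E2 2;
          {card E1, card E2} = {card H div 2, (card H + 1) div 2};
          edge_coloring_run E1 h \<phi>1 p1;
          edge_coloring_run E2 h \<phi>2 p2 \<rbrakk> \<Longrightarrow>
         edge_coloring_run H (Suc h) (\<lambda>e. if e \<in> E1 then \<phi>1 e else p1 + \<phi>2 e) (p1 + p2)"

end

theory Submission
  imports Defs
begin

lemma deg_le_maxdeg:
  assumes "finite E" shows "deg E v \<le> maxdeg E"
proof (cases "v \<in> \<Union>E")
  case True
  have fin: "finite ({deg E v | v. v \<in> \<Union>E} \<union> {0})"
  proof -
    have "{deg E v | v. v \<in> \<Union>E} \<subseteq> {0..card E}"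
      unfolding deg_def using assms by (auto intro: card_mono)
    then show ?thesis using finite_subset by blast
  qed
  show ?thesis unfolding maxdeg_def using True by (intro Max_ge[OF fin]) blast
next
  case False
  then have "{e\<in>E. v \<in> e} = {}" by blast
  then have "deg E v = 0" unfolding deg_def by (simp only: card.empty)
  then show ?thesis by simp
qed

lemma maxdeg_le:
  assumes "finite E" "\<And>v. deg E v \<le> M" shows "maxdeg E \<le> M"
proof -
  have fin: "finite ({deg E v | v. v \<in> \<Union>E} \<union> {0})"
  proof -
    have "{deg E v | v. v \<in> \<Union>E} \<subseteq> {0..card E}"
      unfolding deg_def using assms by (auto intro: card_mono)
    then show ?thesis using finite_subset by blast
  qed
  show ?thesis unfolding maxdeg_def
    using assms(2) by (subst Max_le_iff[OF fin]) auto
qed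

lemma deg_split:
  assumes "finite H" "degree_splitting H E1 E2 k"
  shows "deg H v = deg E1 v + deg E2 v"
proof -
  have u: "E1 \<union> E2 = H" and d: "E1 \<inter> E2 = {}" using assms(2) unfolding degree_splitting_def by auto
  have "{e\<in>H. v \<in> e} = {e\<in>E1. v \<in> e} \<union> {e\<in>E2. v \<in> e}" using u by auto
  moreover have "finite E1" "finite E2" using u assms(1) by auto
  ultimately show ?thesis unfolding deg_def using d
    by (subst card_Un_disjoint[symmetric]) auto
qed

lemma main:
  assumes "edge_coloring_run H h \<phi> p"
  shows "finite H \<Longrightarrow> proper_edge_coloring H p \<phi> \<and> p + 2 \<le> maxdeg H + 3 * 2 ^ h"
  using assms
proof (induction rule: edge_coloring_run.induct)
  case (base H \<phi>)
  then show ?case by simp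
next
  case (step H E1 E2 h \<phi>1 p1 \<phi>2 p2)
  have u: "E1 \<union> E2 = H" and d: "E1 \<inter> E2 = {}" using step.hyps(1) unfolding degree_splitting_def by auto
  have f1: "finite E1" and f2: "finite E2" using u step.prems by auto
  have IH1: "proper_edge_coloring E1 p1 \<phi>1" "p1 + 2 \<le> maxdeg E1 + 3 * 2 ^ h" using step.IH(1)[OF f1] by auto
  have IH2: "proper_edge_coloring E2 p2 \<phi>2" "p2 + 2 \<le> maxdeg E2 + 3 * 2 ^ h" using step.IH(2)[OF f2] by auto
  let ?D = "maxdeg H"
  have dv: "deg H v = deg E1 v + deg E2 v" "\<bar>int (deg E1 v) - int (deg E2 v)\<bar> \<le> 2"
    "deg H v \<le> ?D" for v
    using deg_split[OF step.prems step.hyps(1)] step.hyps(1) deg_le_maxdeg[OF step.prems]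
    unfolding degree_splitting_def by auto
  have "deg E1 v \<le> (?D + 2) div 2" for v
  proof -
    have a: "int (deg E1 v) - int (deg E2 v) \<le> 2" "int (deg E2 v) - int (deg E1 v) \<le> 2"
      using dv(2)[of v] by (simp_all add: abs_le_iff)
    have "deg E1 v + deg E2 v \<le> ?D" using dv(1,3)[of v] by simp
    then have "2 * deg E1 v \<le> ?D + 2" using a by linarith
    then have "(2 * deg E1 v) div 2 \<le> (?D + 2) div 2" by (rule div_le_mono)
    then show ?thesis by (simp only: div_mult_self1_is_m[OF zero_less_numeral])
  qed
  then have m1: "maxdeg E1 \<le> (?D + 2) div 2" by (rule maxdeg_le[OF f1])
  have "deg E2 v \<le> (?D + 2) div 2" for v
  proof -
    have a: "int (deg E1 v) - int (deg E2 v) \<le> 2" "int (deg E2 v) - int (deg E1 v) \<le> 2"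
      using dv(2)[of v] by (simp_all add: abs_le_iff)
    have "deg E1 v + deg E2 v \<le> ?D" using dv(1,3)[of v] by simp
    then have "2 * deg E2 v \<le> ?D + 2" using a by linarith
    then have "(2 * deg E2 v) div 2 \<le> (?D + 2) div 2" by (rule div_le_mono)
    then show ?thesis by (simp only: div_mult_self1_is_m[OF zero_less_numeral])
  qed
  then have m2: "maxdeg E2 \<le> (?D + 2) div 2" by (rule maxdeg_le[OF f2])
  have hd: "2 * ((?D + 2) div 2) \<le> ?D + 2" by (rule times_div_less_eq_dividend)
  have s12: "maxdeg E1 + maxdeg E2 \<le> ?D + 2" using m1 m2 hd by linarith
  have e2: "3 * 2 ^ Suc h = 2 * (3 * 2 ^ h :: nat)" by simp
  have bound: "p1 + p2 + 2 \<le> ?D + 3 * 2 ^ Suc h"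
    unfolding e2 using IH1(2) IH2(2) s12 by linarith
  have pr: "proper_edge_coloring H (p1 + p2) (\<lambda>e. if e \<in> E1 then \<phi>1 e else p1 + \<phi>2 e)"
    unfolding proper_edge_coloring_def
  proof (intro conjI ballI impI)
    fix e assume "e \<in> H"
    have c1: "\<phi>1 x \<in> {1..p1}" if "x \<in> E1" for x using IH1(1) that unfolding proper_edge_coloring_def by blast
    have c2: "\<phi>2 x \<in> {1..p2}" if "x \<in> E2" for x using IH2(1) that unfolding proper_edge_coloring_def by blast
    show "(if e \<in> E1 then \<phi>1 e else p1 + \<phi>2 e) \<in> {1..p1 + p2}"
    proof (cases "e \<in> E1")
      case True then show ?thesis using c1[of e] by simp
    next
      case False then have "e \<in> E2" using u \<open>e \<in> H\<close> by blast
      then show ?thesis using c2[of e] False by simp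
    qed
  next
    fix e e' assume a: "e \<in> H" "e' \<in> H" "e \<noteq> e' \<and> e \<inter> e' \<noteq> {}"
    have c1: "\<phi>1 x \<in> {1..p1}" if "x \<in> E1" for x using IH1(1) that unfolding proper_edge_coloring_def by blast
    have c2: "\<phi>2 x \<in> {1..p2}" if "x \<in> E2" for x using IH2(1) that unfolding proper_edge_coloring_def by blast
    have q1: "\<phi>1 e \<noteq> \<phi>1 e'" if "e \<in> E1" "e' \<in> E1" using IH1(1) that a(3) unfolding proper_edge_coloring_def by blast
    have q2: "\<phi>2 e \<noteq> \<phi>2 e'" if "e \<in> E2" "e' \<in> E2" using IH2(1) that a(3) unfolding proper_edge_coloring_def by blast
    show "(if e \<in> E1 then \<phi>1 e else p1 + \<phi>2 e) \<noteq> (if e' \<in> E1 then \<phi>1 e' else p1 + \<phi>2 e')"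
    proof (cases "e \<in> E1"; cases "e' \<in> E1")
      assume "e \<in> E1" "e' \<in> E1" then show ?thesis using q1 by simp
    next
      assume "e \<in> E1" "e' \<notin> E1" then show ?thesis using c1[of e] c2[of e'] u a(2) by auto
    next
      assume "e \<notin> E1" "e' \<in> E1" then show ?thesis using c1[of e'] c2[of e] u a(1) by auto
    next
      assume "e \<notin> E1" "e' \<notin> E1" then show ?thesis using q2 u a(1,2) by auto
    qed
  qed
  show ?case using pr bound by (rule conjI)
qed

theorem lemma3p5:
  fixes G :: "'a set set" and h :: nat and \<phi> :: "'a set \<Rightarrow> nat" and p :: nat
  assumes "graph G"
    and "real h \<le> log 2 (real (maxdeg G))"
    and "edge_coloring_run G h \<phi> p"
  shows "proper_edge_coloring G (maxdeg G + 3 * 2 ^ h) \<phi>"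
proof -
  have "finite G" using assms(1) unfolding graph_def by simp
  from main[OF assms(3) this] have "proper_edge_coloring G p \<phi>" "p \<le> maxdeg G + 3 * 2 ^ h" by auto
  then show ?thesis unfolding proper_edge_coloring_def
    by (meson atLeastAtMost_iff order_trans)
qed

end
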